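(* Let $A$ be a unital Banach algebra with unit $1_A$, and let $(c_n)_{n\in \mathbb{Z}}\subset A$ be a cosine sequence, i.e. $c_0=1_A$ and $c_{m+n}+c_{m-n}=2c_mc_n$ for all $m,n\in\mathbb{Z}$. Assume $\sup_{n\ge 1}\Vert c_n\Vert \le M<+\infty$. Then $\sup_{p\ge 1}\Vert c_n^p\Vert \le M$ for every $n\ge 1$, and $$\Vert \arccos(c_n)\Vert \le \frac{M+1}{2}\pi \quad (n\ge 1).$$ Moreover $\mathrm{Spec}(c_n)\subset[-1,1]$ for every $n\in\mathbb{N}$, and for every character $\chi$ on $A$ we have $\chi(c_n)=\cos(n\beta_\chi)$ for $n\ge 1$, where $\beta_\chi=\chi(\arccos(c_1))=\arccos(\chi(c_1))\in[0,\pi]$.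
   Context: For an element $x$ of a unital Banach algebra $A$ with $\sup_{n\ge 1}\Vert x^n\Vert<+\infty$, $\arccos(x)$ is defined by the (convergent) series $\arccos(x)=\frac{\pi}{2}1_A-\sum_{n=0}^{\infty}\frac{(2n)!}{2^{2n}(2n+1)(n!)^2}x^{2n+1}$. A character on $A$ is a nonzero algebra homomorphism $A\to\mathbb{C}$. For complex numbers, $\arccos$ denotes the usual function $[-1,1]\to[0,\pi]$. *)

theory Defs
  imports "HOL-Analysis.Analysis"
begin

class complex_banach_algebra_1 = real_normed_algebra_1 + banach +
  fixes cscale :: "complex \<Rightarrow> 'a \<Rightarrow> 'a"
  assumes cscale_of_real: "cscale (complex_of_real r) x = scaleR r x"
    and cscale_add_right: "cscale a (x + y) = cscale a x + cscale a y"
    and cscale_add_left: "cscale (a + b) x = cscale a x + cscale b x"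
    and cscale_assoc: "cscale a (cscale b x) = cscale (a * b) x"
    and cscale_one: "cscale 1 x = x"
    and norm_cscale: "norm (cscale a x) = cmod a * norm x"
    and cscale_mult_left: "cscale a (x * y) = cscale a x * y"
    and cscale_mult_right: "cscale a (x * y) = x * cscale a y"

definition alg_invertible :: "'a::monoid_mult \<Rightarrow> bool" where
  "alg_invertible x \<longleftrightarrow> (\<exists>y. x * y = 1 \<and> y * x = 1)"

definition spec :: "'a::complex_banach_algebra_1 \<Rightarrow> complex set" where
  "spec x = {l. \<not> alg_invertible (cscale l 1 - x)}"

definition character :: "('a::complex_banach_algebra_1 \<Rightarrow> complex) \<Rightarrow> bool" where
  "character chi \<longleftrightarrow>
     (\<forall>x y. chi (x + y) = chi x + chi y) \<and>
     (\<forall>c x. chi (cscale c x) = c * chi x) \<and>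
     (\<forall>x y. chi (x * y) = chi x * chi y) \<and>
     (\<exists>x. chi x \<noteq> 0)"

definition cosine_seq :: "(int \<Rightarrow> 'a::ring_1) \<Rightarrow> bool" where
  "cosine_seq c \<longleftrightarrow> c 0 = 1 \<and> (\<forall>m n. c (m + n) + c (m - n) = 2 * c m * c n)"

definition arcsin_coeff :: "nat \<Rightarrow> real" where
  "arcsin_coeff n = fact (2*n) / (2 ^ (2*n) * real (2*n+1) * (fact n)^2)"

text \<open>arccos in a Banach algebra, via the series (meaningful when the powers are bounded).\<close>
definition ba_arccos :: "'a::complex_banach_algebra_1 \<Rightarrow> 'a" where
  "ba_arccos x = scaleR (pi/2) 1 - (\<Sum>n. scaleR (arcsin_coeff n) (x ^ (2*n+1)))"

end

theory Submission
  imports Defs "HOL-Analysis.Kronecker_Approximation_Theorem"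
begin


context
  fixes dummy :: "'a::complex_banach_algebra_1"
begin
end

lemma cscale_zero_right [simp]: "cscale a (0::'a::complex_banach_algebra_1) = 0"
proof -
  have "cscale a (0::'a) = cscale a 0 + cscale a 0" using cscale_add_right[of a "0::'a" 0] by simp
  thus ?thesis by simp
qed

lemma cscale_zero_left [simp]: "cscale 0 (x::'a::complex_banach_algebra_1) = 0"
  using cscale_of_real[of 0 x] by simp

lemma cscale_minus_right: "cscale a (- x) = - cscale a (x::'a::complex_banach_algebra_1)"
proof -
  have "cscale a (-x) + cscale a x = 0" using cscale_add_right[of a "-x" x] by simp
  thus ?thesis by (rule add_eq_0_iff2[THEN iffD1])
qed

lemma cscale_diff_right: "cscale a (x - y) = cscale a x - cscale a (y::'a::complex_banach_algebra_1)"
  using cscale_add_right[of a x "-y"] by (simp add: cscale_minus_right)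

lemma cscale_minus_left: "cscale (- a) x = - cscale a (x::'a::complex_banach_algebra_1)"
proof -
  have "cscale (-a) x + cscale a x = 0" using cscale_add_left[of "-a" a x] by simp
  thus ?thesis by (rule add_eq_0_iff2[THEN iffD1])
qed

lemma cscale_diff_left: "cscale (a - b) x = cscale a x - cscale b (x::'a::complex_banach_algebra_1)"
  using cscale_add_left[of a "-b" x] by (simp add: cscale_minus_left)

lemma cscale_one_left_mult: "cscale a 1 * x = cscale a (x::'a::complex_banach_algebra_1)"
  using cscale_mult_left[of a 1 x] by simp

lemma cscale_one_right_mult: "x * cscale a 1 = cscale a (x::'a::complex_banach_algebra_1)"
  using cscale_mult_right[of a x 1] by simp

lemma cscale_real: "cscale (complex_of_real r) (1::'a::complex_banach_algebra_1) = of_real r"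
proof -
  have "cscale (complex_of_real r) (1::'a) = r *\<^sub>R 1" by (rule cscale_of_real)
  also have "\<dots> = of_real r" by (simp add: of_real_def)
  finally show ?thesis .
qed

lemma scaleR_cscale: "scaleR r (cscale a x) = cscale (of_real r * a) (x::'a::complex_banach_algebra_1)"
  by (subst cscale_of_real[symmetric]) (rule cscale_assoc)

lemma cscale_scaleR: "cscale a (scaleR r x) = cscale (a * of_real r) (x::'a::complex_banach_algebra_1)"
  by (subst cscale_of_real[symmetric]) (rule cscale_assoc)

lemma bounded_linear_cscale: "bounded_linear (cscale a :: 'a::complex_banach_algebra_1 \<Rightarrow> 'a)"
  by (rule bounded_linear_intro[where K="cmod a"])
     (auto simp: cscale_add_right cscale_scaleR scaleR_cscale mult.commute norm_cscale)

lemma bounded_linear_cscale_left: "bounded_linear (\<lambda>a. cscale a (x::'a::complex_banach_algebra_1))"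
proof (rule bounded_linear_intro[where K="norm x"])
  fix r :: real and b :: complex
  have "r *\<^sub>R b = complex_of_real r * b" by (simp add: scaleR_conv_of_real)
  then show "cscale (r *\<^sub>R b) x = r *\<^sub>R cscale b x" by (simp add: scaleR_cscale)
qed (auto simp: cscale_add_left norm_cscale)

lemma cscale_sum_left: "cscale (sum f J) (x::'a::complex_banach_algebra_1) = (\<Sum>j\<in>J. cscale (f j) x)"
  by (induction J rule: infinite_finite_induct) (auto simp: cscale_add_left)

lemma cscale_sum_right: "cscale a (sum f J) = (\<Sum>j\<in>J. cscale a (f j::'a::complex_banach_algebra_1))"
  by (induction J rule: infinite_finite_induct) (auto simp: cscale_add_right)

definition ainv :: "'a::monoid_mult \<Rightarrow> 'a" where
  "ainv x = (THE y. x * y = 1 \<and> y * x = 1)"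

lemma inv_unique: "(x::'a::monoid_mult) * y = 1 \<Longrightarrow> z * x = 1 \<Longrightarrow> y = z"
  by (metis mult.assoc mult_1 mult_1_right)

lemma ainv: assumes "alg_invertible x" shows "x * ainv x = 1" "ainv x * x = 1"
proof -
  obtain y where y: "x * y = 1" "y * x = 1" using assms unfolding alg_invertible_def by blast
  have "x * ainv x = 1 \<and> ainv x * x = 1"
    unfolding ainv_def apply (rule theI[of _ y])
    using y inv_unique by blast+
  then show "x * ainv x = 1" "ainv x * x = 1" by auto
qed

lemma ainv_eq: "(x::'a::monoid_mult) * y = 1 \<Longrightarrow> y * x = 1 \<Longrightarrow> ainv x = y"
proof -
  assume a: "x * y = 1" "y * x = 1"
  then have "alg_invertible x" unfolding alg_invertible_def by blast
  from ainv[OF this] a show ?thesis using inv_unique by metis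
qed

lemma neumann:
  fixes y :: "'a::{real_normed_algebra_1,banach}"
  assumes "norm y < 1"
  shows "(1 - y) * (\<Sum>n. y^n) = 1" "(\<Sum>n. y^n) * (1 - y) = 1"
    "norm ((\<Sum>n. y^n) - 1) \<le> norm y / (1 - norm y)"
proof -
  have s: "summable (\<lambda>n. y^n)" by (rule complete_algebra_summable_geometric[OF assms])
  have h: "(\<Sum>n. y ^ Suc n) = (\<Sum>n. y^n) - 1"
    using suminf_split_head[OF s] by simp
  have "y * (\<Sum>n. y^n) = (\<Sum>n. y ^ Suc n)"
    using suminf_mult[OF s, of y] by simp
  then show "(1 - y) * (\<Sum>n. y^n) = 1" using h by (simp add: algebra_simps)
  have "(\<Sum>n. y^n) * y = (\<Sum>n. y ^ Suc n)"
    by (simp only: suminf_mult2[OF s] power_Suc2)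
  then show "(\<Sum>n. y^n) * (1 - y) = 1" using h by (simp add: algebra_simps)
  have g: "(\<lambda>n. norm y ^ Suc n) sums (norm y * (1 / (1 - norm y)))"
    using sums_mult[OF geometric_sums[of "norm y"], of "norm y"] assms by simp
  have "norm (\<Sum>n. y ^ Suc n) \<le> (\<Sum>n. norm y ^ Suc n)"
  proof (rule norm_suminf_le)
    show "norm (y ^ Suc n) \<le> norm y ^ Suc n" for n by (rule norm_power_ineq)
  qed (rule sums_summable[OF g])
  also have "\<dots> = norm y / (1 - norm y)" using sums_unique[OF g] by simp
  finally show "norm ((\<Sum>n. y^n) - 1) \<le> norm y / (1 - norm y)" using h by simp
qed

lemma neumann_inv:
  fixes y :: "'a::{real_normed_algebra_1,banach}"
  assumes "norm y < 1"
  shows "alg_invertible (1 - y)"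
  using neumann[OF assms] unfolding alg_invertible_def by blast

lemma invertible_far:
  fixes x :: "'a::complex_banach_algebra_1"
  assumes "norm x < cmod l"
  shows "alg_invertible (cscale l 1 - x)"
proof -
  have l: "l \<noteq> 0" using assms norm_ge_zero[of x] by auto
  have "norm (cscale (1/l) x) < 1" using assms l by (simp add: norm_cscale norm_divide field_simps)
  then obtain z where z: "(1 - cscale (1/l) x) * z = 1" "z * (1 - cscale (1/l) x) = 1"
    using neumann_inv unfolding alg_invertible_def by blast
  have e: "cscale l 1 - x = cscale l (1 - cscale (1/l) x)"
    using l by (simp add: cscale_diff_right cscale_assoc cscale_one)
  show ?thesis unfolding alg_invertible_def e
    apply (rule exI[of _ "cscale (1/l) z"])
    using l z by (simp add: cscale_mult_left[symmetric] cscale_mult_right[symmetric] cscale_assoc cscale_one)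
qed


context
  fixes chi :: "'a::complex_banach_algebra_1 \<Rightarrow> complex"
  assumes ch: "character chi"
begin

lemma chi_add: "chi (x + y) = chi x + chi y"
  using ch unfolding character_def by blast

lemma chi_cscale: "chi (cscale l x) = l * chi x"
  using ch unfolding character_def by blast

lemma chi_mult: "chi (x * y) = chi x * chi y"
  using ch unfolding character_def by blast

lemma chi_one: "chi 1 = 1"
proof -
  obtain x where x: "chi x \<noteq> 0" using ch unfolding character_def by blast
  have "chi x = chi x * chi 1" using chi_mult[of x 1] by simp
  with x show ?thesis by simp
qed

lemma chi_zero: "chi 0 = 0"
  using chi_add[of 0 0] by simp

lemma chi_minus: "chi (- x) = - chi x"
  using chi_add[of "-x" x] chi_zero by (simp add: eq_neg_iff_add_eq_0)

lemma chi_diff: "chi (x - y) = chi x - chi y"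
  using chi_add[of x "-y"] chi_minus[of y] by simp

lemma chi_cscale1: "chi (cscale l 1) = l"
  using chi_cscale[of l 1] chi_one by simp

lemma chi_scaleR: "chi (scaleR r x) = of_real r * chi x"
  using chi_cscale[of "of_real r" x] by (simp add: cscale_of_real)

lemma chi_of_real: "chi (of_real r) = of_real r"
  using chi_scaleR[of r 1] chi_one by (simp add: of_real_def)

lemma chi_not_inv: "\<not> alg_invertible (cscale (chi x) 1 - x)"
proof
  assume "alg_invertible (cscale (chi x) 1 - x)"
  then obtain y where y: "(cscale (chi x) 1 - x) * y = 1" unfolding alg_invertible_def by blast
  have "chi ((cscale (chi x) 1 - x) * y) = 0"
    by (simp add: chi_mult chi_diff chi_cscale1)
  with y chi_one show False by simp
qed

lemma norm_chi: "cmod (chi x) \<le> norm x"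
  using chi_not_inv[of x] invertible_far[of x "chi x"] by force

lemma bounded_linear_chi: "bounded_linear chi"
proof (rule bounded_linear_intro[where K=1])
  fix r x show "chi (r *\<^sub>R x) = r *\<^sub>R chi x" unfolding chi_scaleR by (simp add: scaleR_conv_of_real)
qed (auto simp: chi_add norm_chi)

lemma chi_power: "chi (x ^ n) = chi x ^ n"
  by (induction n) (auto simp: chi_one chi_mult)

end

lemma spec_norm: "l \<in> spec x \<Longrightarrow> cmod l \<le> norm x"
  unfolding spec_def using invertible_far[of x l] by force

lemma inv_near:
  fixes a b x :: "'a::{real_normed_algebra_1,banach}"
  assumes ab: "a * b = 1" "b * a = 1" and small: "norm b * norm (x - a) < 1/2"
  shows "alg_invertible x" "norm (ainv x - b) \<le> 2 * norm b ^ 2 * norm (x - a)"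
proof -
  define y where "y = b * (a - x)"
  have ny: "norm y \<le> norm b * norm (x - a)"
    unfolding y_def using norm_mult_ineq[of b "a - x"] by (simp add: norm_minus_commute)
  have ny1: "norm y < 1/2" using ny small by linarith
  define S where "S = (\<Sum>n. y^n)"
  have N: "(1 - y) * S = 1" "S * (1 - y) = 1" "norm (S - 1) \<le> norm y / (1 - norm y)"
    using neumann[of y] ny1 unfolding S_def by auto
  have xa: "x = a * (1 - y)"
  proof -
    have "a * (1 - y) = a - (a * b) * (a - x)" unfolding y_def by (simp add: right_diff_distrib mult.assoc)
    also have "\<dots> = x" using ab by simp
    finally show ?thesis by simp
  qed
  have i1: "x * (S * b) = 1"
  proof -
    have "x * (S * b) = a * ((1 - y) * S) * b" by (simp only: xa mult.assoc)
    also have "\<dots> = 1" by (simp add: N(1) ab(1))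
    finally show ?thesis .
  qed
  have i2: "(S * b) * x = 1"
  proof -
    have "(S * b) * x = S * (b * a) * (1 - y)" by (simp only: xa mult.assoc)
    also have "\<dots> = 1" by (simp add: N(2) ab(2))
    finally show ?thesis .
  qed
  show "alg_invertible x" using i1 i2 unfolding alg_invertible_def by blast
  have e: "ainv x = S * b" using ainv_eq[OF i1 i2] .
  have "norm (ainv x - b) = norm ((S - 1) * b)" by (simp add: e algebra_simps)
  also have "\<dots> \<le> norm (S - 1) * norm b" by (rule norm_mult_ineq)
  also have "\<dots> \<le> (norm y / (1 - norm y)) * norm b" by (rule mult_right_mono[OF N(3)]) simp
  also have "\<dots> \<le> (2 * norm y) * norm b"
  proof (rule mult_right_mono)
    have "norm y / (1 - norm y) \<le> norm y / (1/2)"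
      by (rule divide_left_mono) (use ny1 in auto)
    then show "norm y / (1 - norm y) \<le> 2 * norm y" by simp
  qed simp
  also have "\<dots> \<le> 2 * (norm b * norm (x - a)) * norm b"
    using ny by (intro mult_right_mono) auto
  finally show "norm (ainv x - b) \<le> 2 * norm b ^ 2 * norm (x - a)"
    by (simp add: power2_eq_square mult_ac)
qed

lemma isCont_ainv:
  fixes a :: "'a::{real_normed_algebra_1,banach}"
  assumes "alg_invertible a"
  shows "isCont ainv a"
proof -
  define b where "b = ainv a"
  have ab: "a * b = 1" "b * a = 1" using ainv[OF assms] unfolding b_def by auto
  show ?thesis unfolding continuous_at_eps_delta
  proof (intro allI impI)
    fix e :: real assume e: "e > 0"
    define d where "d = min (1 / (4 * (norm b + 1))) (e / (4 * (norm b + 1)^2))"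
    have nb1: "norm b + 1 > 0" by (simp add: add_nonneg_pos)
    have d: "d > 0" using e nb1 by (simp add: d_def)
    show "\<exists>d>0. \<forall>x'. dist x' a < d \<longrightarrow> dist (ainv x') (ainv a) < e"
    proof (intro exI[of _ d] conjI allI impI d)
      fix x assume xd: "dist x a < d"
      have nb: "norm b * norm (x - a) \<le> (norm b + 1) * d"
        using xd by (intro mult_mono) (auto simp: dist_norm)
      also have "\<dots> \<le> (norm b + 1) * (1 / (4 * (norm b + 1)))"
        by (intro mult_left_mono) (auto simp: d_def)
      also have "\<dots> = 1/4" using nb1 by simp
      also have "\<dots> < 1/2" by simp
      finally have sm: "norm b * norm (x - a) < 1/2" .
      have "norm (ainv x - b) \<le> 2 * norm b ^ 2 * norm (x - a)" by (rule inv_near(2)[OF ab sm])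
      also have "\<dots> \<le> 2 * (norm b + 1) ^ 2 * d"
        using xd by (intro mult_mono power_mono) (auto simp: dist_norm)
      also have "\<dots> \<le> 2 * (norm b + 1) ^ 2 * (e / (4 * (norm b + 1)^2))"
        by (intro mult_left_mono) (auto simp: d_def)
      also have "\<dots> = e / 2" using nb1 by (simp add: field_simps)
      also have "\<dots> < e" using e by simp
      finally show "dist (ainv x) (ainv a) < e" by (simp add: dist_norm b_def)
    qed
  qed
qed

lemma continuous_on_ainv_comp:
  fixes f :: "'b::topological_space \<Rightarrow> 'a::{real_normed_algebra_1,banach}"
  assumes "continuous_on S f" "\<And>t. t \<in> S \<Longrightarrow> alg_invertible (f t)"
  shows "continuous_on S (\<lambda>t. ainv (f t))"
proof -
  have "continuous_on (f ` S) ainv"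
    by (rule continuous_at_imp_continuous_on) (use assms(2) isCont_ainv in auto)
  then show ?thesis by (rule continuous_on_compose2[OF _ assms(1)]) auto
qed


lemma two_cancel:
  fixes x y :: "'a::real_normed_algebra_1"
  assumes "2 * x = 2 * y" shows "x = y"
proof -
  have "(2::real) *\<^sub>R x = 2 *\<^sub>R y" using assms by (simp add: scaleR_conv_of_real)
  thus ?thesis by simp
qed

lemma cscale_two: "cscale 2 y = 2 * (y::'a::complex_banach_algebra_1)"
proof -
  have "cscale (complex_of_real 2) y = 2 *\<^sub>R y" by (rule cscale_of_real)
  thus ?thesis by (simp add: scaleR_conv_of_real)
qed

lemma invertible_cscale:
  fixes x :: "'a::complex_banach_algebra_1"
  assumes "a \<noteq> 0" "alg_invertible x" shows "alg_invertible (cscale a x)"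
proof -
  obtain y where y: "x * y = 1" "y * x = 1" using assms(2) unfolding alg_invertible_def by blast
  have "cscale a x * cscale (1/a) y = 1" "cscale (1/a) y * cscale a x = 1"
    using assms(1) y
    by (simp_all add: cscale_mult_left[symmetric] cscale_mult_right[symmetric] cscale_assoc cscale_one)
  thus ?thesis unfolding alg_invertible_def by blast
qed

lemma invertible_cscale_iff:
  fixes x :: "'a::complex_banach_algebra_1"
  assumes "a \<noteq> 0" shows "alg_invertible (cscale a x) \<longleftrightarrow> alg_invertible x"
proof
  assume "alg_invertible (cscale a x)"
  from invertible_cscale[OF _ this, of "1/a"] assms show "alg_invertible x"
    by (simp add: cscale_assoc cscale_one)
qed (rule invertible_cscale[OF assms])

definition gen :: "(int \<Rightarrow> 'a::complex_banach_algebra_1) \<Rightarrow> complex \<Rightarrow> 'a" where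
  "gen c t = (\<Sum>k. cscale (t^k) (c (int k)))"

definition Pq :: "(int \<Rightarrow> 'a::complex_banach_algebra_1) \<Rightarrow> complex \<Rightarrow> 'a" where
  "Pq c t = 1 - cscale (2*t) (c 1) + cscale (t^2) 1"

context
  fixes c :: "int \<Rightarrow> 'a::complex_banach_algebra_1"
  assumes cs: "cosine_seq c"
begin

lemma cs_0: "c 0 = 1" using cs unfolding cosine_seq_def by blast

lemma cs_eq: "c (m + n) + c (m - n) = 2 * c m * c n" using cs unfolding cosine_seq_def by blast

lemma cs_sym: "c (- n) = c n"
proof -
  have "c n + c (- n) = 2 * c n" using cs_eq[of 0 n] by (simp add: cs_0)
  thus ?thesis by (simp add: mult_2)
qed

lemma cs_comm: "c m * c n = c n * c m"
proof -
  have "2 * c m * c n = c (m + n) + c (m - n)" using cs_eq[of m n] by (rule sym)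
  also have "\<dots> = c (n + m) + c (n - m)"
  proof -
    have "c (m - n) = c (n - m)" using cs_sym[of "n - m"] by (simp only: minus_diff_eq)
    then show ?thesis by (simp only: add.commute[of m n])
  qed
  also have "\<dots> = 2 * c n * c m" by (rule cs_eq)
  finally have "2 * c m * c n = 2 * c n * c m" .
  then have "2 * (c m * c n) = 2 * (c n * c m)" by (simp only: mult.assoc)
  then show ?thesis by (rule two_cancel)
qed

lemma cs_rec: "2 * c 1 * c k = c (k + 1) + c (k - 1)"
proof -
  have "c (1 + k) + c (1 - k) = 2 * c 1 * c k" by (rule cs_eq)
  moreover have "c (1 - k) = c (k - 1)" using cs_sym[of "k - 1"] by (simp only: minus_diff_eq)
  ultimately show ?thesis by (simp only: add.commute[of 1 k])
qed

end

lemma cosine_seq_scaled: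
  fixes c :: "int \<Rightarrow> 'a::complex_banach_algebra_1"
  assumes "cosine_seq c" shows "cosine_seq (\<lambda>k. c (k * n))"
  unfolding cosine_seq_def
proof (intro conjI allI)
  show "c (0 * n) = 1" using cs_0[OF assms] by simp
  fix a b :: int
  show "c ((a + b) * n) + c ((a - b) * n) = 2 * c (a * n) * c (b * n)"
    using cs_eq[OF assms, of "a * n" "b * n"] by (simp add: algebra_simps)
qed

context
  fixes c :: "int \<Rightarrow> 'a::complex_banach_algebra_1" and K :: real
  assumes cs: "cosine_seq c" and bd: "\<And>k::nat. norm (c (int k)) \<le> K"
begin

lemma gen_sums:
  assumes t: "cmod t < 1"
  shows "(\<lambda>k. cscale (t^k) (c (int k))) sums gen c t"
proof -
  have "summable (\<lambda>k. K * cmod t ^ k)" using t by (intro summable_mult summable_geometric) simp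
  then have "summable (\<lambda>k. cscale (t^k) (c (int k)))"
  proof (rule summable_comparison_test'[where N=0])
    fix n :: nat
    have "norm (cscale (t^n) (c (int n))) = cmod t ^ n * norm (c (int n))"
      by (simp add: norm_cscale norm_power)
    also have "\<dots> \<le> cmod t ^ n * K" by (rule mult_left_mono[OF bd]) simp
    finally show "norm (cscale (t^n) (c (int n))) \<le> K * cmod t ^ n" by (simp add: mult.commute)
  qed
  then show ?thesis unfolding gen_def by (rule summable_sums)
qed

lemma gen_eq:
  assumes t: "cmod t < 1"
  shows "Pq c t * gen c t = 1 - cscale t (c 1)"
proof -
  define f where "f k = cscale (t^k) (c (int k))" for k
  define S where "S = gen c t"
  have fS: "f sums S" unfolding f_def S_def by (rule gen_sums[OF t])
  have f0: "f 0 = 1" by (simp add: f_def cs_0[OF cs] cscale_one)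
  have s1: "(\<lambda>k. f (Suc k)) sums (S - 1)"
    by (subst sums_Suc_iff) (simp add: f0 fS)
  define g where "g k = cscale (t ^ Suc k) (c (int k - 1))" for k
  have gS: "(\<lambda>k. g (Suc k)) = (\<lambda>k. cscale (t^2) (f k))"
    by (rule ext) (simp add: g_def f_def cscale_assoc power2_eq_square mult.assoc)
  have "(\<lambda>k. cscale (t^2) (f k)) sums cscale (t^2) S"
    by (rule bounded_linear.sums[OF bounded_linear_cscale fS])
  then have "(\<lambda>k. g (Suc k)) sums cscale (t^2) S" by (simp only: gS)
  then have "g sums (cscale (t^2) S + g 0)" by (simp only: sums_Suc_iff)
  moreover have "g 0 = cscale t (c 1)" using cs_sym[OF cs, of 1] by (simp add: g_def)
  ultimately have s2: "g sums (cscale (t^2) S + cscale t (c 1))" by simp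
  have s3: "(\<lambda>k. cscale (2*t) (c 1 * f k)) sums cscale (2*t) (c 1 * S)"
    by (rule bounded_linear.sums[OF bounded_linear_cscale sums_mult[OF fS]])
  have e3: "cscale (2*t) (c 1 * f k) = f (Suc k) + g k" for k
  proof -
    have "cscale (2*t) (c 1 * f k) = cscale (t ^ Suc k) (cscale 2 (c 1 * c (int k)))"
      by (simp add: f_def cscale_mult_right[symmetric] cscale_assoc mult_ac)
    also have "cscale 2 (c 1 * c (int k)) = c (int k + 1) + c (int k - 1)"
      by (simp add: cscale_two cs_rec[OF cs] mult.assoc[symmetric])
    finally show ?thesis by (simp add: f_def g_def cscale_add_right add.commute)
  qed
  have "(\<lambda>k. f (Suc k) + g k) sums ((S - 1) + (cscale (t^2) S + cscale t (c 1)))"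
    by (rule sums_add[OF s1 s2])
  with s3 have E: "cscale (2*t) (c 1 * S) = (S - 1) + (cscale (t^2) S + cscale t (c 1))"
    using sums_unique2 e3 by (metis (no_types, lifting) ext)
  have "Pq c t * S = S - cscale (2*t) (c 1 * S) + cscale (t^2) S"
    by (simp add: Pq_def algebra_simps cscale_mult_left[symmetric] cscale_one_left_mult)
  also have "\<dots> = 1 - cscale t (c 1)" by (simp add: E)
  finally show ?thesis by (simp add: S_def)
qed

lemma gen_comm:
  assumes t: "cmod t < 1"
  shows "gen c t * c 1 = c 1 * gen c t"
proof -
  have a: "(\<lambda>k. cscale (t^k) (c (int k)) * c 1) sums (gen c t * c 1)"
    by (rule sums_mult2[OF gen_sums[OF t]])
  have b: "(\<lambda>k. c 1 * cscale (t^k) (c (int k))) sums (c 1 * gen c t)"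
    by (rule sums_mult[OF gen_sums[OF t]])
  have "(\<lambda>k. cscale (t^k) (c (int k)) * c 1) = (\<lambda>k. c 1 * cscale (t^k) (c (int k)))"
    by (rule ext) (simp add: cscale_mult_left[symmetric] cscale_mult_right[symmetric] cs_comm[OF cs])
  with a b show ?thesis using sums_unique2 by metis
qed

lemma Pq_comm:
  assumes t: "cmod t < 1"
  shows "gen c t * Pq c t = Pq c t * gen c t"
proof -
  have "gen c t * cscale (2*t) (c 1) = cscale (2*t) (c 1) * gen c t"
    by (simp add: cscale_mult_left[symmetric] cscale_mult_right[symmetric] gen_comm[OF t])
  then show ?thesis
    by (simp add: Pq_def algebra_simps cscale_one_left_mult cscale_one_right_mult)
qed

lemma two_scaleR_one: "(2::real) *\<^sub>R (1::'b::real_normed_algebra_1) = 2"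
  by (simp add: scaleR_conv_of_real)

definition hgen where "hgen t = 2 *\<^sub>R gen c t - 1"

lemma Pq_hgen:
  assumes t: "cmod t < 1"
  shows "Pq c t * hgen t = cscale (1 - t^2) 1" "hgen t * Pq c t = cscale (1 - t^2) 1"
proof -
  have "Pq c t * hgen t = 2 *\<^sub>R (Pq c t * gen c t) - Pq c t"
    by (simp add: hgen_def algebra_simps)
  also have "\<dots> = 2 *\<^sub>R (1 - cscale t (c 1)) - Pq c t" by (simp add: gen_eq[OF t])
  also have "\<dots> = cscale (1 - t^2) 1"
    by (simp add: Pq_def algebra_simps scaleR_cscale cscale_diff_left cscale_one two_scaleR_one)
  finally show "Pq c t * hgen t = cscale (1 - t^2) 1" .
  moreover have "hgen t * Pq c t = Pq c t * hgen t"
    by (simp add: hgen_def algebra_simps Pq_comm[OF t])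
  ultimately show "hgen t * Pq c t = cscale (1 - t^2) 1" by simp
qed

lemma Pq_inv_disc:
  assumes t: "cmod t < 1"
  shows "alg_invertible (Pq c t)" "ainv (Pq c t) = cscale (1 / (1 - t^2)) (hgen t)"
proof -
  have nz: "1 - t^2 \<noteq> 0"
  proof
    assume "1 - t^2 = 0" then have "cmod (t^2) = 1" by (metis eq_iff_diff_eq_0 norm_one)
    with t show False by (simp add: norm_power) (metis abs_square_eq_1 norm_ge_zero abs_of_nonneg less_irrefl)
  qed
  have i1: "Pq c t * cscale (1 / (1 - t^2)) (hgen t) = 1"
    using nz by (simp add: cscale_mult_right[symmetric] Pq_hgen(1)[OF t] cscale_assoc cscale_one)
  have i2: "cscale (1 / (1 - t^2)) (hgen t) * Pq c t = 1"
    using nz by (simp add: cscale_mult_left[symmetric] Pq_hgen(2)[OF t] cscale_assoc cscale_one)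
  show "alg_invertible (Pq c t)" using i1 i2 unfolding alg_invertible_def by blast
  show "ainv (Pq c t) = cscale (1 / (1 - t^2)) (hgen t)" by (rule ainv_eq[OF i1 i2])
qed

end

lemma Pq_scale:
  assumes "t \<noteq> 0"
  shows "Pq c t = cscale (2*t) (cscale ((t + 1/t)/2) 1 - c 1)"
proof -
  have e: "2*t*((t + 1/t)/2) = 1 + t^2" using assms by (simp add: field_simps power2_eq_square)
  have "cscale (2*t) (cscale ((t + 1/t)/2) 1 - c 1) = cscale (2*t*((t+1/t)/2)) 1 - cscale (2*t) (c 1)"
    by (simp only: cscale_diff_right cscale_assoc)
  also have "\<dots> = cscale (1 + t^2) 1 - cscale (2*t) (c 1)" by (simp only: e)
  also have "\<dots> = Pq c t" by (simp add: Pq_def cscale_add_left cscale_one)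
  finally show ?thesis by simp
qed

lemma Pq_recip:
  assumes "t \<noteq> 0"
  shows "Pq c t = cscale (t^2) (Pq c (1/t))"
  using assms
  by (simp add: Pq_def cscale_diff_right cscale_add_right cscale_assoc cscale_one field_simps power2_eq_square)


lemma quad_root:
  fixes l :: complex
  assumes "l \<notin> complex_of_real ` {-1..1}"
  obtains t where "cmod t < 1" "t \<noteq> 0" "l = (t + 1/t)/2"
proof -
  define s where "s = csqrt (l^2 - 1)"
  define t1 where "t1 = l - s"
  define t2 where "t2 = l + s"
  have "t1 * t2 = l^2 - s^2" by (simp add: t1_def t2_def power2_eq_square algebra_simps)
  also have "s^2 = l^2 - 1" by (simp add: s_def)
  finally have p: "t1 * t2 = 1" by simp
  then have nz: "t1 \<noteq> 0" "t2 \<noteq> 0" by auto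
  have i1: "1 / t1 = t2" using p nz by (simp add: field_simps)
  have i2: "1 / t2 = t1" using p nz by (simp add: field_simps)
  have sm: "t1 + t2 = 2 * l" by (simp add: t1_def t2_def)
  have l1: "l = (t1 + 1/t1)/2" using sm i1 by simp
  have l2: "l = (t2 + 1/t2)/2" using sm i2 by (simp add: add.commute)
  show thesis
  proof (cases "cmod t1 < 1")
    case True then show ?thesis using that nz l1 by blast
  next
    case f1: False
    show ?thesis
    proof (cases "cmod t2 < 1")
      case True then show ?thesis using that nz l2 by blast
    next
      case f2: False
      have "cmod t1 * cmod t2 = 1" using p by (metis norm_mult norm_one)
      with f1 f2 have m1: "cmod t1 = 1"
        by (metis less_eq_real_def mult_le_cancel_left1 mult.commute not_less mult_less_cancel_left1 order_trans linorder_not_le)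
      have "t1 * cnj t1 = 1" using m1 complex_norm_square[of t1] by simp
      then have "cnj t1 = t2" using p nz by (metis mult_left_cancel)
      then have "l = complex_of_real (Re t1)" using sm complex_add_cnj[of t1] by simp
      moreover have "\<bar>Re t1\<bar> \<le> 1" using abs_Re_le_cmod[of t1] m1 by simp
      ultimately have "l \<in> complex_of_real ` {-1..1}" by (intro image_eqI[of _ _ "Re t1"]) auto
      with assms show ?thesis by blast
    qed
  qed
qed

lemma spec_cos_sub:
  fixes c :: "int \<Rightarrow> 'a::complex_banach_algebra_1"
  assumes cs: "cosine_seq c" and bd: "\<And>k::nat. norm (c (int k)) \<le> K"
  shows "spec (c 1) \<subseteq> complex_of_real ` {-1..1}"
proof
  fix l assume l: "l \<in> spec (c 1)"
  show "l \<in> complex_of_real ` {-1..1}"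
  proof (rule ccontr)
    assume "l \<notin> complex_of_real ` {-1..1}"
    then obtain t where t: "cmod t < 1" "t \<noteq> 0" "l = (t + 1/t)/2" by (rule quad_root)
    have "alg_invertible (Pq c t)" by (rule Pq_inv_disc(1)[OF cs bd t(1)])
    then have "alg_invertible (cscale (2*t) (cscale l 1 - c 1))" using Pq_scale[OF t(2), of c] t(3) by metis
    then have "alg_invertible (cscale l 1 - c 1)" using invertible_cscale_iff[of "2*t" "cscale l 1 - c 1"] t(2) by simp
    with l show False unfolding spec_def by simp
  qed
qed

lemma bound_all:
  fixes c :: "int \<Rightarrow> 'a::complex_banach_algebra_1"
  assumes cs: "cosine_seq c" and bd: "\<forall>n\<ge>1. norm (c n) \<le> M"
  shows "norm (c k) \<le> max M 1"
proof (cases "k = 0")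
  case True then show ?thesis by (simp add: cs_0[OF cs])
next
  case False
  then have "norm (c \<bar>k\<bar>) \<le> M" using bd by simp
  moreover have "c \<bar>k\<bar> = c k" using cs_sym[OF cs, of k] by (cases "k \<ge> 0") auto
  ultimately show ?thesis by simp
qed

theorem spec_all:
  fixes c :: "int \<Rightarrow> 'a::complex_banach_algebra_1"
  assumes cs: "cosine_seq c" and bd: "\<forall>n\<ge>1. norm (c n) \<le> M"
  shows "spec (c (int n)) \<subseteq> complex_of_real ` {-1..1}"
proof -
  have "spec ((\<lambda>k. c (k * int n)) 1) \<subseteq> complex_of_real ` {-1..1}"
    by (rule spec_cos_sub[OF cosine_seq_scaled[OF cs], where K="max M 1"])
       (rule bound_all[OF cs bd])
  then show ?thesis by simp
qed


lemma roots_sum: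
  fixes z :: complex
  assumes N: "N > 0" and zN: "z ^ N = 1" and zk: "\<And>k. z ^ k = 1 \<longleftrightarrow> N dvd k"
  shows "(\<Sum>j<N. (z ^ j) ^ k) = (if N dvd k then of_nat N else 0)"
proof -
  have "(\<Sum>j<N. (z ^ j) ^ k) = (\<Sum>j<N. (z ^ k) ^ j)" by (simp add: power_mult[symmetric] mult.commute)
  also have "\<dots> = (if z ^ k = 1 then of_nat N else (1 - (z^k)^N) / (1 - z^k))" by (rule sum_gp_strict)
  also have "(z^k)^N = 1" by (metis power_mult mult.commute zN power_one)
  finally show ?thesis using zk[of k] by simp
qed

lemma norm_root: fixes z :: complex assumes "N > 0" "z ^ N = 1" shows "cmod z = 1"
  using power_eq_1_iff[OF assms(2)] assms(1) by simp

context
  fixes c :: "int \<Rightarrow> 'a::complex_banach_algebra_1" and K :: real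
  assumes cs: "cosine_seq c" and bd: "\<And>k::nat. norm (c (int k)) \<le> K"
begin

lemma K_nonneg: "K \<ge> 0"
proof -
  have "norm (c 0) \<le> K" using bd[of 0] by simp
  thus ?thesis using norm_ge_zero order_trans by blast
qed

lemma gen_avg:
  fixes z :: complex and r :: real
  assumes r: "0 < r" "r < 1" and N: "N > 0" and zN: "z ^ N = 1" and zk: "\<And>k. z ^ k = 1 \<longleftrightarrow> N dvd k"
  shows "norm (scaleR (1 / real N) (\<Sum>j<N. gen c (of_real r * z^j)) - 1)
           \<le> K * sqrt r ^ N / (1 - sqrt r)"
proof -
  have nz: "cmod z = 1" by (rule norm_root[OF N zN])
  have small: "cmod (of_real r * z^j) < 1" for j using r nz by (simp add: norm_mult norm_power)
  define u where "u k = cscale (of_real (r^k) * (if N dvd k then 1 else 0)) (c (int k))" for k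
  have "(\<lambda>k. \<Sum>j<N. cscale ((of_real r * z^j)^k) (c (int k))) sums (\<Sum>j<N. gen c (of_real r * z^j))"
    by (rule sums_sum) (rule gen_sums[OF cs bd small])
  also have "(\<lambda>k. \<Sum>j<N. cscale ((of_real r * z^j)^k) (c (int k)))
      = (\<lambda>k. cscale (of_real (r^k) * (if N dvd k then of_nat N else 0)) (c (int k)))"
  proof (rule ext)
    fix k
    have "(\<Sum>j<N. cscale ((of_real r * z^j)^k) (c (int k))) = cscale (\<Sum>j<N. (of_real r * z^j)^k) (c (int k))"
      by (simp add: cscale_sum_left)
    also have "(\<Sum>j<N. (of_real r * z^j)^k) = of_real (r^k) * (\<Sum>j<N. (z^j)^k)"
      by (simp add: power_mult_distrib sum_distrib_left)
    also have "\<dots> = of_real (r^k) * (if N dvd k then of_nat N else 0)" by (simp add: roots_sum[OF N zN zk])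
    finally show "(\<Sum>j<N. cscale ((of_real r * z^j)^k) (c (int k)))
      = cscale (of_real (r^k) * (if N dvd k then of_nat N else 0)) (c (int k))" .
  qed
  finally have s0: "(\<lambda>k. cscale (complex_of_real (r ^ k) * (if N dvd k then of_nat N else 0)) (c (int k)))
      sums (\<Sum>j<N. gen c (complex_of_real r * z ^ j))" .
  have "(\<lambda>k. scaleR (1 / real N) (cscale (complex_of_real (r ^ k) * (if N dvd k then of_nat N else 0)) (c (int k))))
      sums scaleR (1 / real N) (\<Sum>j<N. gen c (complex_of_real r * z ^ j))"
    by (rule bounded_linear.sums[OF bounded_linear_scaleR_right s0])
  also have "(\<lambda>k. scaleR (1 / real N) (cscale (complex_of_real (r ^ k) * (if N dvd k then of_nat N else 0)) (c (int k))))
      = u"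
    using N by (auto simp: u_def scaleR_cscale fun_eq_iff)
  finally have su: "u sums scaleR (1 / real N) (\<Sum>j<N. gen c (complex_of_real r * z ^ j))" .
  define X where "X = scaleR (1 / real N) (\<Sum>j<N. gen c (complex_of_real r * z ^ j))"
  have u0: "u 0 = 1" by (simp add: u_def cs_0[OF cs] cscale_one)
  have s1: "(\<lambda>k. u (Suc k)) sums (X - 1)" by (subst sums_Suc_iff) (simp add: u0 su[folded X_def])
  define \<rho> where "\<rho> = sqrt r"
  have \<rho>: "0 < \<rho>" "\<rho> < 1" using r by (auto simp: \<rho>_def)
  have g: "(\<lambda>k. K * \<rho>^N * \<rho>^k) sums (K * \<rho>^N * (1 / (1 - \<rho>)))"
    by (rule sums_mult[OF geometric_sums]) (use \<rho> in simp)
  have bnd: "norm (u (Suc k)) \<le> K * \<rho>^N * \<rho>^k" for k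
  proof (cases "N dvd Suc k")
    case False then show ?thesis using K_nonneg \<rho> by (simp add: u_def)
  next
    case True
    then have Nk: "N \<le> Suc k" by (simp add: dvd_imp_le)
    have "norm (u (Suc k)) = r ^ Suc k * norm (c (int (Suc k)))"
      using True r by (simp add: u_def norm_cscale norm_mult norm_power)
    also have "\<dots> \<le> r ^ Suc k * K" by (rule mult_left_mono[OF bd]) (use r in simp)
    also have "r ^ Suc k = \<rho> ^ Suc k * \<rho> ^ Suc k"
    proof -
      have rr: "r = \<rho> * \<rho>" using r by (simp add: \<rho>_def)
      show ?thesis by (simp only: rr power_mult_distrib)
    qed
    also have "\<rho> ^ Suc k * \<rho> ^ Suc k \<le> \<rho> ^ N * \<rho> ^ k"
      by (intro mult_mono power_decreasing) (use \<rho> Nk in auto)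
    finally show ?thesis using K_nonneg by (simp add: mult_ac mult_right_mono)
  qed
  have "norm (X - 1) \<le> K * \<rho>^N * (1 / (1 - \<rho>))" by (rule norm_sums_le[OF s1 g bnd])
  then show ?thesis by (simp add: X_def \<rho>_def)
qed

end


lemma two_R: "(2::real) *\<^sub>R (1::'b::real_normed_algebra_1) = 2"
  by (simp add: scaleR_conv_of_real)

lemma one_minus_sq_nz: fixes t :: complex assumes "cmod t < 1" shows "1 - t^2 \<noteq> 0"
proof
  assume "1 - t^2 = 0"
  then have "t^2 = 1" by simp
  then have "cmod t ^ 2 = 1" by (metis norm_one norm_power)
  with assms show False by (metis abs_square_eq_1 norm_ge_zero abs_of_nonneg less_irrefl)
qed

lemma ainv_cscale:
  fixes x :: "'a::complex_banach_algebra_1"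
  assumes "a \<noteq> 0" "alg_invertible x"
  shows "ainv (cscale a x) = cscale (1/a) (ainv x)"
proof (rule ainv_eq)
  show "cscale a x * cscale (1 / a) (ainv x) = 1" using assms ainv[OF assms(2)]
    by (simp add: cscale_mult_left[symmetric] cscale_mult_right[symmetric] cscale_assoc cscale_one)
  show "cscale (1 / a) (ainv x) * cscale a x = 1" using assms ainv[OF assms(2)]
    by (simp add: cscale_mult_left[symmetric] cscale_mult_right[symmetric] cscale_assoc cscale_one)
qed

definition kf :: "(int \<Rightarrow> 'a::complex_banach_algebra_1) \<Rightarrow> complex \<Rightarrow> 'a" where
  "kf c t = cscale (1 - t^2) 1 * ainv (Pq c t)"

lemma continuous_on_cscale_left:
  "continuous_on S g \<Longrightarrow> continuous_on S (\<lambda>t. cscale (g t) (x::'a::complex_banach_algebra_1))"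
  by (rule bounded_linear.continuous_on[OF bounded_linear_cscale_left])

lemma continuous_Pq: "continuous_on S (Pq c)"
proof -
  have "continuous_on S (\<lambda>t. 1 - cscale (2*t) (c 1) + cscale (t^2) 1)"
    by (intro continuous_on_add continuous_on_diff continuous_on_const continuous_on_cscale_left
          continuous_on_mult continuous_on_id continuous_on_power)
  then show ?thesis unfolding Pq_def[abs_def] .
qed

lemma avg_diff_bound:
  fixes f g :: "nat \<Rightarrow> 'a::real_normed_vector"
  assumes N: "N > 0" and b: "\<And>j. j < N \<Longrightarrow> norm (f j - g j) < e"
  shows "norm (scaleR (1 / real N) (\<Sum>j<N. f j) - scaleR (1 / real N) (\<Sum>j<N. g j)) < e"
proof -
  have "norm (scaleR (1 / real N) (\<Sum>j<N. f j) - scaleR (1 / real N) (\<Sum>j<N. g j))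
      = (1 / real N) * norm (\<Sum>j<N. f j - g j)"
    by (simp add: scaleR_diff_right[symmetric] sum_subtractf)
  also have "norm (\<Sum>j<N. f j - g j) \<le> (\<Sum>j<N. norm (f j - g j))" by (rule norm_sum)
  also have "\<dots> < (\<Sum>j<N. e)" by (rule sum_strict_mono) (use N b in auto)
  also have "(\<Sum>j<N. e) = real N * e" by simp
  finally show ?thesis using N by (simp add: field_simps)
qed

lemma avg_const:
  assumes N: "N > 0"
  shows "scaleR (1 / real N) (\<Sum>j<N. (1::'a::real_normed_algebra_1)) = 1"
proof -
  have "(\<Sum>j<N. (1::'a)) = real N *\<^sub>R 1" by (simp add: scaleR_conv_of_real)
  then show ?thesis using N by simp
qed

context
  fixes c :: "int \<Rightarrow> 'a::complex_banach_algebra_1" and K :: real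
  assumes cs: "cosine_seq c" and bd: "\<And>k::nat. norm (c (int k)) \<le> K"
begin

lemma avg_hgen:
  assumes N: "N > 0"
  shows "scaleR (1 / real N) (\<Sum>j<N. hgen c (w j)) - 1
        = 2 *\<^sub>R (scaleR (1 / real N) (\<Sum>j<N. gen c (w j)) - 1)"
proof -
  define X where "X = scaleR (1 / real N) (\<Sum>j<N. gen c (w j))"
  have e: "(\<Sum>j<N. hgen c (w j)) = 2 *\<^sub>R (\<Sum>j<N. gen c (w j)) - (\<Sum>j<N. (1::'a))"
    by (simp add: hgen_def[OF cs bd] sum_subtractf scaleR_sum_right)
  have "scaleR (1 / real N) (\<Sum>j<N. hgen c (w j))
      = scaleR (1 / real N) (2 *\<^sub>R (\<Sum>j<N. gen c (w j))) - scaleR (1 / real N) (\<Sum>j<N. (1::'a))"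
    unfolding e by (rule scaleR_diff_right)
  also have "scaleR (1 / real N) (\<Sum>j<N. (1::'a)) = 1" by (rule avg_const[OF N])
  also have "scaleR (1 / real N) (2 *\<^sub>R (\<Sum>j<N. gen c (w j))) = 2 *\<^sub>R X"
    unfolding X_def by (simp only: scaleR_scaleR mult.commute)
  finally have "scaleR (1 / real N) (\<Sum>j<N. hgen c (w j)) = 2 *\<^sub>R X - 1" .
  moreover have "2 *\<^sub>R X - 1 - 1 = 2 *\<^sub>R (X - 1)"
    by (simp add: scaleR_diff_right two_R)
  ultimately show ?thesis unfolding X_def by simp
qed

lemma kf_disc:
  assumes t: "cmod t < 1"
  shows "kf c t = hgen c t"
  using one_minus_sq_nz[OF t]
  by (simp add: kf_def Pq_inv_disc(2)[OF cs bd t] cscale_one_left_mult cscale_assoc cscale_one)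

lemma all_inv:
  assumes H: "\<And>t. cmod t = 1 \<Longrightarrow> alg_invertible (Pq c t)"
  shows "alg_invertible (Pq c t)"
proof -
  consider "cmod t < 1" | "cmod t = 1" | "cmod t > 1" by linarith
  then show ?thesis
  proof cases
    case 1 then show ?thesis by (rule Pq_inv_disc(1)[OF cs bd])
  next
    case 2 then show ?thesis by (rule H)
  next
    case 3
    then have t0: "t \<noteq> 0" by auto
    have "cmod (1/t) < 1" using 3 by (auto simp: norm_divide divide_less_eq_1)
    then have "alg_invertible (Pq c (1/t))" by (rule Pq_inv_disc(1)[OF cs bd])
    then have "alg_invertible (cscale (t^2) (Pq c (1/t)))" using invertible_cscale[of "t^2" "Pq c (1/t)"] t0 by simp
    then show ?thesis using Pq_recip[OF t0, of c] by simp
  qed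
qed

lemma kf_out:
  assumes t: "cmod t > 1"
  shows "kf c t = - hgen c (1/t)"
proof -
  have t0: "t \<noteq> 0" using t by auto
  have t1: "cmod (1/t) < 1" using t by (auto simp: norm_divide divide_less_eq_1)
  have nz: "1 - (1/t)^2 \<noteq> 0" by (rule one_minus_sq_nz[OF t1])
  have "ainv (Pq c t) = cscale (1/t^2) (ainv (Pq c (1/t)))"
    using Pq_recip[OF t0, of c] ainv_cscale[of "t^2" "Pq c (1/t)"] t0 Pq_inv_disc(1)[OF cs bd t1] by simp
  also have "\<dots> = cscale (1/t^2 * (1 / (1 - (1/t)^2))) (hgen c (1/t))"
    by (simp add: Pq_inv_disc(2)[OF cs bd t1] cscale_assoc)
  finally have e: "kf c t = cscale ((1 - t^2) * (1/t^2 * (1 / (1 - (1/t)^2)))) (hgen c (1/t))"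
    by (simp add: kf_def cscale_one_left_mult cscale_assoc)
  have "(1 - t^2) * (1/t^2 * (1 / (1 - (1/t)^2))) = -1"
  proof -
    have "1 - (1/t)^2 = (t^2 - 1) / t^2" using t0 by (simp add: field_simps)
    moreover have "t^2 - 1 \<noteq> 0" using nz t0 by (simp add: field_simps)
    ultimately show ?thesis using t0 by (simp add: field_simps)
  qed
  with e show ?thesis by (simp add: cscale_minus_left cscale_one)
qed

lemma kf_cont:
  assumes H: "\<And>t. cmod t = 1 \<Longrightarrow> alg_invertible (Pq c t)"
  shows "continuous_on UNIV (kf c)"
proof -
  have "continuous_on UNIV (\<lambda>t. cscale (1 - t^2) 1 * ainv (Pq c t))"
  proof (rule continuous_on_mult)
    show "continuous_on UNIV (\<lambda>t. cscale (1 - t^2) (1::'a))"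
      by (intro continuous_on_cscale_left continuous_on_diff continuous_on_const
          continuous_on_power continuous_on_id)
    show "continuous_on UNIV (\<lambda>t. ainv (Pq c t))"
      by (rule continuous_on_ainv_comp[OF continuous_Pq]) (rule all_inv[OF H])
  qed
  then show ?thesis unfolding kf_def[abs_def] .
qed

lemma r_bound:
  fixes r m :: real
  assumes "r = 1 - m" "0 < m" "m \<le> 1/4"
  shows "1/r - r \<le> 3 * m" "r > 0" "r < 1" "1/r \<le> 2"
proof -
  have r: "r \<ge> 3/4" "r < 1" using assms by auto
  have "(2*r - 1)*(r - 1) \<le> 0" by (rule mult_nonneg_nonpos) (use r in auto)
  then have "1 \<le> r * (3 - 2*r)" by (simp add: algebra_simps)
  then have "1/r \<le> 3 - 2*r" using r by (simp add: field_simps)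
  then show "1/r - r \<le> 3 * m" using assms by simp
  show "r > 0" "r < 1" using r by auto
  show "1/r \<le> 2" using r by (simp add: field_simps)
qed

theorem circle_point: "\<exists>t. cmod t = 1 \<and> \<not> alg_invertible (Pq c t)"
proof (rule ccontr)
  assume "\<not> ?thesis"
  then have H: "\<And>t. cmod t = 1 \<Longrightarrow> alg_invertible (Pq c t)" by blast
  have "uniformly_continuous_on (cball 0 2) (kf c)"
    by (rule compact_uniformly_continuous[OF continuous_on_subset[OF kf_cont[OF H]]]) auto
  then obtain \<delta> where \<delta>: "\<delta> > 0"
    and uc: "\<And>x x'. x \<in> cball 0 2 \<Longrightarrow> x' \<in> cball 0 2 \<Longrightarrow> dist x' x < \<delta> \<Longrightarrow> dist (kf c x') (kf c x) < 1/2"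
    unfolding uniformly_continuous_on_def by (metis zero_less_divide_1_iff zero_less_numeral)
  define m where "m = min (1/4) (\<delta>/8)"
  define r where "r = 1 - m"
  have m: "0 < m" "m \<le> 1/4" "m \<le> \<delta>/8" using \<delta> by (auto simp: m_def)
  note rb = r_bound[OF r_def m(1,2)]
  define \<rho> where "\<rho> = sqrt r"
  have \<rho>: "0 < \<rho>" "\<rho> < 1" using rb by (auto simp: \<rho>_def)
  have Kn: "K \<ge> 0" by (rule K_nonneg[OF cs bd])
  obtain n where n: "\<rho> ^ n < (1 - \<rho>) / (4 * (K + 1))"
    using real_arch_pow_inv[of "(1 - \<rho>) / (4 * (K + 1))" \<rho>] \<rho> Kn by auto
  define N where "N = Suc n"
  have N: "N > 0" by (simp add: N_def)
  have "\<rho> ^ N \<le> \<rho> ^ n" unfolding N_def by (rule power_decreasing) (use \<rho> in auto)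
  with n have \<rho>N: "\<rho> ^ N < (1 - \<rho>) / (4 * (K + 1))" by linarith
  have est: "2 * (K * \<rho> ^ N / (1 - \<rho>)) < 1/2"
  proof -
    have "K * \<rho> ^ N \<le> (K + 1) * \<rho> ^ N" using \<rho> by (intro mult_right_mono) auto
    also have "\<dots> < (K + 1) * ((1 - \<rho>) / (4 * (K + 1)))" by (rule mult_strict_left_mono[OF \<rho>N]) (use Kn in auto)
    also have "\<dots> = (1 - \<rho>) / 4" using Kn by (simp add: field_simps)
    finally have "K * \<rho> ^ N < (1 - \<rho>) / 4" .
    then have "K * \<rho> ^ N / (1 - \<rho>) < 1/4" using \<rho> by (simp add: field_simps)
    then show ?thesis by linarith
  qed
  define z :: complex where "z = exp (2 * of_real pi * \<i> / of_nat N)"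
  have zk: "z ^ k = exp (2 * of_real pi * \<i> * of_nat k / of_nat N)" for k
    unfolding z_def exp_of_nat_mult[symmetric] by (simp add: mult_ac)
  have zdvd: "z ^ k = 1 \<longleftrightarrow> N dvd k" for k
    unfolding zk using complex_root_unity_eq_1[of N k] N by simp
  have zN: "z ^ N = 1" using zdvd by simp
  have nz: "cmod z = 1" by (rule norm_root[OF N zN])
  define z' where "z' = cnj z"
  have z'dvd: "z' ^ k = 1 \<longleftrightarrow> N dvd k" for k
    unfolding z'_def complex_cnj_power[symmetric] using zdvd[of k] by (metis complex_cnj_one complex_cnj_cnj)
  have z'N: "z' ^ N = 1" using z'dvd by simp
  define A where "A = scaleR (1 / real N) (\<Sum>j<N. hgen c (of_real r * z^j))"
  define B where "B = scaleR (1 / real N) (\<Sum>j<N. hgen c (of_real r * z'^j))"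
  have A1: "norm (A - 1) < 1/2"
  proof -
    have "norm (A - 1) = 2 * norm (scaleR (1 / real N) (\<Sum>j<N. gen c (of_real r * z^j)) - 1)"
      unfolding A_def avg_hgen[OF N] by simp
    also have "\<dots> \<le> 2 * (K * sqrt r ^ N / (1 - sqrt r))"
      by (intro mult_left_mono gen_avg[OF cs bd _ _ N zN zdvd]) (use rb in auto)
    finally show ?thesis using est by (simp add: \<rho>_def)
  qed
  have B1: "norm (B - 1) < 1/2"
  proof -
    have "norm (B - 1) = 2 * norm (scaleR (1 / real N) (\<Sum>j<N. gen c (of_real r * z'^j)) - 1)"
      unfolding B_def avg_hgen[OF N] by simp
    also have "\<dots> \<le> 2 * (K * sqrt r ^ N / (1 - sqrt r))"
      by (intro mult_left_mono gen_avg[OF cs bd _ _ N z'N z'dvd]) (use rb in auto)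
    finally show ?thesis using est by (simp add: \<rho>_def)
  qed
  have pts: "norm (kf c (of_real r * z^j) - kf c (z^j / of_real r)) < 1/2" for j
  proof -
    have nzj: "cmod (z^j) = 1" using nz by (simp add: norm_power)
    have p1: "of_real r * z^j \<in> cball 0 2" using nzj rb by (simp add: norm_mult)
    have p2: "z^j / of_real r \<in> cball 0 2" using nzj rb by (simp add: norm_divide)
    have "of_real r * z^j - z^j / of_real r = z^j * complex_of_real (r - 1/r)"
      using rb by (simp add: field_simps)
    then have "dist (of_real r * z^j) (z^j / of_real r) = cmod (z^j * complex_of_real (r - 1/r))"
      by (simp only: dist_norm)
    also have "\<dots> = cmod (z^j) * \<bar>r - 1/r\<bar>" by (simp only: norm_mult norm_of_real)
    also have "\<dots> = 1/r - r"
    proof -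
      have ge: "1 \<le> 1/r" using rb by simp
      have "\<bar>r - 1/r\<bar> = 1/r - r" using ge rb(3) by arith
      then show ?thesis using nzj by simp
    qed
    also have "\<dots> < \<delta>" using rb(1) m by linarith
    finally have "dist (of_real r * z^j) (z^j / of_real r) < \<delta>" .
    from uc[OF p2 p1 this] show ?thesis by (simp add: dist_norm)
  qed
  have kin: "kf c (of_real r * z^j) = hgen c (of_real r * z^j)" for j
    by (rule kf_disc) (use nz rb in \<open>simp add: norm_mult norm_power\<close>)
  have kout: "kf c (z^j / of_real r) = - hgen c (of_real r * z'^j)" for j
  proof -
    have nzj: "cmod (z^j) = 1" using nz by (simp add: norm_power)
    have "cmod (z^j / of_real r) > 1" using nzj rb by (simp add: norm_divide field_simps)
    then have "kf c (z^j / of_real r) = - hgen c (1 / (z^j / of_real r))" by (rule kf_out)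
    also have "1 / (z^j / of_real r) = of_real r * z'^j"
    proof -
      have "z^j * cnj (z^j) = 1" using nzj complex_norm_square[of "z^j"] by simp
      then have "1 / z^j = cnj (z^j)" by (metis nonzero_mult_div_cancel_left div_by_1 mult_zero_left zero_neq_one)
      then have e1: "1 / z^j = z'^j" by (simp add: z'_def complex_cnj_power)
      have "1 / (z^j / of_real r) = of_real r / z^j" by simp
      also have "\<dots> = of_real r * (1 / z^j)" by simp
      also have "\<dots> = of_real r * z'^j" by (simp only: e1)
      finally show ?thesis .
    qed
    finally show ?thesis .
  qed
  have AB: "norm (A - (- B)) < 1/2"
  proof -
    have "norm (scaleR (1 / real N) (\<Sum>j<N. kf c (of_real r * z^j)) - scaleR (1 / real N) (\<Sum>j<N. kf c (z^j / of_real r))) < 1/2"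
      by (rule avg_diff_bound[OF N pts])
    moreover have "scaleR (1 / real N) (\<Sum>j<N. kf c (of_real r * z^j)) = A" by (simp add: A_def kin)
    moreover have "scaleR (1 / real N) (\<Sum>j<N. kf c (z^j / of_real r)) = - B"
      by (simp add: B_def kout sum_negf)
    ultimately show ?thesis by simp
  qed
  have eq: "(2::'a) = (A + B) - (A - 1) - (B - 1)" by (simp add: algebra_simps)
  have "norm (2::'a) = norm ((A + B) - (A - 1) - (B - 1))" by (subst eq) (rule refl)
  also have "\<dots> \<le> norm ((A + B) - (A - 1)) + norm (B - 1)" by (rule norm_triangle_ineq4)
  also have "\<dots> \<le> norm (A + B) + norm (A - 1) + norm (B - 1)"
    using norm_triangle_ineq4[of "A + B" "A - 1"] by simp
  also have "\<dots> < 3/2" using AB A1 B1 by simp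
  finally show False by simp
qed

end


lemma of_real_comm: "of_real r * x = x * (of_real r :: 'a::real_normed_algebra_1)"
  by (simp add: of_real_def)

context
  fixes c :: "int \<Rightarrow> 'a::complex_banach_algebra_1" and \<beta> :: real
  assumes cs: "cosine_seq c"
begin

fun Q :: "nat \<Rightarrow> 'a" where
  "Q 0 = 0"
| "Q (Suc 0) = 1"
| "Q (Suc (Suc n)) = 2 * of_real (cos (real (Suc n) * \<beta>)) + 2 * c 1 * Q (Suc n) - Q n"

lemma Q_comm: "Q n * c 1 = c 1 * Q n"
proof (induction n rule: Q.induct)
  case (3 n)
  have a: "of_real (cos (real (Suc n) * \<beta>)) * c 1 = c 1 * of_real (cos (real (Suc n) * \<beta>))"
    by (rule of_real_comm)
  show ?case by (simp add: algebra_simps mult_2 mult_2_right 3 of_real_comm[of _ "c 1"] del: of_real_add)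
qed simp_all

lemma cos_rec: "cos (real (Suc (Suc n)) * \<beta>) = 2 * cos \<beta> * cos (real (Suc n) * \<beta>) - cos (real n * \<beta>)"
proof -
  have "cos (real (Suc (Suc n)) * \<beta>) = cos (real (Suc n) * \<beta> + \<beta>)" by (simp add: algebra_simps)
  moreover have "cos (real n * \<beta>) = cos (real (Suc n) * \<beta> - \<beta>)" by (simp add: algebra_simps)
  ultimately show ?thesis by (simp add: cos_add cos_diff)
qed

lemma D_fact: "of_real (cos (real n * \<beta>)) - c (int n) = (of_real (cos \<beta>) - c 1) * Q n"
proof (induction n rule: Q.induct)
  case 1 then show ?case by (simp add: cs_0[OF cs])
next
  case 2 then show ?case by simp
next
  case (3 n)
  define d where "d = c 1"
  define l where "l = (of_real (cos \<beta>) :: 'a)"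
  define a1 where "a1 = (of_real (cos (real (Suc n) * \<beta>)) :: 'a)"
  define a0 where "a0 = (of_real (cos (real n * \<beta>)) :: 'a)"
  have a2: "of_real (cos (real (Suc (Suc n)) * \<beta>)) = 2 * l * a1 - a0"
    by (simp only: cos_rec l_def a1_def a0_def of_real_mult of_real_diff of_real_numeral)
  have c2: "c (int (Suc (Suc n))) = 2 * d * c (int (Suc n)) - c (int n)"
    using cs_rec[OF cs, of "int (Suc n)"] by (simp add: d_def algebra_simps)
  have ld: "l * d = d * l" by (simp add: l_def of_real_comm)
  have la: "a1 * d = d * a1" by (simp add: a1_def of_real_comm)
  have "of_real (cos (real (Suc (Suc n)) * \<beta>)) - c (int (Suc (Suc n)))
      = 2 * (l - d) * a1 + 2 * d * (a1 - c (int (Suc n))) - (a0 - c (int n))"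
    unfolding a2 c2 by (simp add: algebra_simps)
  also have "\<dots> = 2 * (l - d) * a1 + 2 * d * ((l - d) * Q (Suc n)) - (l - d) * Q n"
    using 3 by (simp add: l_def a1_def a0_def d_def)
  also have "\<dots> = (l - d) * (2 * a1 + 2 * d * Q (Suc n) - Q n)"
  proof -
    have ld2: "l * (d * X) = d * (l * X)" for X by (simp add: mult.assoc[symmetric] ld)
    show ?thesis by (simp add: algebra_simps mult_2 mult_2_right ld ld2)
  qed
  finally show ?case by (simp add: l_def d_def a1_def)
qed

lemma Q_comm2: "Q n * (of_real (cos \<beta>) - c 1) = (of_real (cos \<beta>) - c 1) * Q n"
  by (simp add: algebra_simps Q_comm of_real_comm)

lemma spec_map:
  assumes ni: "\<not> alg_invertible (of_real (cos \<beta>) - c 1)"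
  shows "\<bar>cos (real n * \<beta>)\<bar> \<le> norm (c (int n))"
proof (rule ccontr)
  assume "\<not> ?thesis"
  then have "norm (c (int n)) < cmod (complex_of_real (cos (real n * \<beta>)))" by simp
  then have "alg_invertible (cscale (complex_of_real (cos (real n * \<beta>))) 1 - c (int n))"
    by (rule invertible_far)
  then obtain y where y: "(of_real (cos (real n * \<beta>)) - c (int n)) * y = 1"
    "y * (of_real (cos (real n * \<beta>)) - c (int n)) = 1"
    unfolding alg_invertible_def cscale_real by blast
  have "(of_real (cos \<beta>) - c 1) * (Q n * y) = 1"
    using y(1) unfolding D_fact by (simp add: mult.assoc)
  moreover have "(y * Q n) * (of_real (cos \<beta>) - c 1) = 1"
    using y(2) unfolding D_fact by (simp add: mult.assoc Q_comm2)
  ultimately have "alg_invertible (of_real (cos \<beta>) - c 1)" unfolding alg_invertible_def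
    using inv_unique by metis
  with ni show False by simp
qed

end

theorem M_ge_1:
  fixes c :: "int \<Rightarrow> 'a::complex_banach_algebra_1"
  assumes cs: "cosine_seq c" and bd: "\<forall>n\<ge>1. norm (c n) \<le> M"
  shows "M \<ge> 1"
proof -
  have bdK: "norm (c (int k)) \<le> max M 1" for k :: nat by (rule bound_all[OF cs bd])
  obtain t where t: "cmod t = 1" "\<not> alg_invertible (Pq c t)" using circle_point[OF cs bdK] by blast
  have t0: "t \<noteq> 0" using t by auto
  have "t * cnj t = 1" using t complex_norm_square[of t] by simp
  then have "1 / t = cnj t" using t0 by (simp add: field_simps)
  then have tl: "(t + 1/t) / 2 = complex_of_real (Re t)" using complex_add_cnj[of t] by simp
  have "\<not> alg_invertible (cscale (2*t) (cscale ((t + 1/t)/2) 1 - c 1))"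
    using t(2) Pq_scale[OF t0, of c] by simp
  then have "\<not> alg_invertible (cscale ((t + 1/t)/2) 1 - c 1)" using invertible_cscale[of "2*t"] t0 by auto
  then have ni0: "\<not> alg_invertible (of_real (Re t) - c 1)" unfolding tl cscale_real .
  define \<beta> where "\<beta> = arccos (Re t)"
  have Re: "\<bar>Re t\<bar> \<le> 1" using abs_Re_le_cmod[of t] t by simp
  have "cos \<beta> = Re t" unfolding \<beta>_def using Re by (simp add: cos_arccos_abs)
  with ni0 have ni: "\<not> alg_invertible (of_real (cos \<beta>) - c 1)" by simp
  have key: "\<bar>cos (real n * \<beta>)\<bar> \<le> M" if "n \<ge> 1" for n :: nat
  proof -
    have "\<bar>cos (real n * \<beta>)\<bar> \<le> norm (c (int n))" by (rule spec_map[OF cs ni])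
    also have "\<dots> \<le> M" using bd that by simp
    finally show ?thesis .
  qed
  have approx: "cos (2 * pi / real N) \<le> M" if N: "N \<ge> 2" for N :: nat
  proof -
    have N0: "N > 0" using N by simp
    obtain h k where hk: "0 < k" "k \<le> int N" "\<bar>of_int k * (\<beta> / (2*pi)) - of_int h\<bar> < 1 / real N"
      using Dirichlet_approx[OF N0, of "\<beta> / (2*pi)"] by blast
    have e: "2 * pi * of_int (- h) + real (nat k) * \<beta> = (2 * pi) * (of_int k * (\<beta> / (2*pi)) - of_int h)"
      using hk(1) by (simp add: field_simps)
    have "\<bar>2 * pi * of_int (- h) + real (nat k) * \<beta>\<bar> = 2 * pi * \<bar>of_int k * (\<beta> / (2*pi)) - of_int h\<bar>"
      unfolding e abs_mult by simp
    also have "\<dots> \<le> 2 * pi / real N" using hk(3) by (simp add: field_simps)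
    finally have "cos (2 * pi / real N) \<le> cos (real (nat k) * \<beta>)"
      by (rule cos_monotone_aux) (use N in \<open>simp add: field_simps\<close>)
    also have "\<dots> \<le> \<bar>cos (real (nat k) * \<beta>)\<bar>" by simp
    also have "\<dots> \<le> M" by (rule key) (use hk(1) in simp)
    finally show ?thesis .
  qed
  show ?thesis
  proof (rule ccontr)
    assume "\<not> M \<ge> 1"
    then have M1: "M < 1" by simp
    have "(\<lambda>N. cos (2 * pi / real N)) \<longlonglongrightarrow> cos 0"
      by (intro tendsto_cos lim_const_over_n)
    then have "eventually (\<lambda>N. M < cos (2 * pi / real N)) sequentially"
      using M1 by (intro order_tendstoD(1)) auto
    then obtain N0 where "\<And>N. N \<ge> N0 \<Longrightarrow> M < cos (2 * pi / real N)"
      unfolding eventually_sequentially by blast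
    then have "M < cos (2 * pi / real (max N0 2))" by simp
    with approx[of "max N0 2"] show False by simp
  qed
qed


definition cb :: "nat \<Rightarrow> real" where "cb n = fact (2*n) / (4^n * (fact n)^2)"

lemma gchoose_Suc_rec: "((a::real) gchoose Suc k) = (a gchoose k) * (a - of_nat k) / of_nat (Suc k)"
proof -
  have "fact (Suc k) * (a gchoose Suc k) = (\<Prod>i = 0..<Suc k. a - of_nat i)" by (rule gbinomial_mult_fact)
  also have "\<dots> = (\<Prod>i = 0..<k. a - of_nat i) * (a - of_nat k)" by simp
  also have "(\<Prod>i = 0..<k. a - of_nat i) = fact k * (a gchoose k)" by (rule gbinomial_mult_fact[symmetric])
  finally have "fact (Suc k) * (a gchoose Suc k) = fact k * (a gchoose k) * (a - of_nat k)" .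
  then have "real (Suc k) * fact k * (a gchoose Suc k) = fact k * (a gchoose k) * (a - of_nat k)"
    by (simp add: fact_Suc algebra_simps)
  then have "real (Suc k) * (a gchoose Suc k) = (a gchoose k) * (a - of_nat k)"
    by (simp add: mult.assoc mult.left_commute[of "fact k"])
  then show ?thesis by (simp add: field_simps del: of_nat_Suc)
qed

lemma cb_Suc: "cb (Suc n) = cb n * ((2 * real n + 1) / (2 * real n + 2))"
proof -
  have f2: "fact (2 * Suc n) = (2 * real n + 2) * (2 * real n + 1) * (fact (2*n) :: real)"
    by (simp add: fact_Suc algebra_simps)
  have f1: "(fact (Suc n) :: real) = (real n + 1) * fact n" by (simp add: fact_Suc)
  have nz: "(fact n :: real) \<noteq> 0" "(4::real)^n \<noteq> 0" by simp_all
  have "cb (Suc n) = ((2 * real n + 2) * (2 * real n + 1) * fact (2*n)) / ((4 * 4^n) * ((real n + 1) * fact n)^2)"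
    unfolding cb_def f2 f1 by simp
  also have "\<dots> = (fact (2*n) / (4^n * (fact n)^2)) * ((2 * real n + 2) * (2 * real n + 1) / (4 * (real n + 1)^2))"
    using nz by (simp add: field_simps power2_eq_square)
  also have "(2 * real n + 2) * (2 * real n + 1) / (4 * (real n + 1)^2) = (2 * real n + 1) / (2 * real n + 2)"
  proof -
    have e: "4 * (real n + 1)^2 = (2*real n + 2) * (2 * real n + 2)" by (simp add: power2_eq_square algebra_simps)
    have nz2: "2 * real n + 2 \<noteq> 0" by simp
    show ?thesis unfolding e using nonzero_mult_divide_mult_cancel_left[OF nz2, of "2 * real n + 1" "2 * real n + 2"] by simp
  qed
  finally show ?thesis by (simp add: cb_def)
qed

lemma cb_gchoose: "((-1/2::real) gchoose n) * (-1)^n = cb n"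
proof (induction n)
  case 0 show ?case by (simp add: cb_def)
next
  case (Suc n)
  have "((-1/2::real) gchoose Suc n) * (-1)^Suc n
      = (((-1/2) gchoose n) * (-1)^n) * ((1/2 + real n) / (real n + 1))"
    by (simp add: gchoose_Suc_rec field_simps)
  also have "\<dots> = cb n * ((1/2 + real n) / (real n + 1))" by (simp only: Suc.IH)
  also have "\<dots> = cb (Suc n)" by (simp add: cb_Suc field_simps)
  finally show ?case .
qed

lemma cb_nonneg: "cb n \<ge> 0" by (simp add: cb_def)

lemma cb_le1: "cb n \<le> 1"
proof (induction n)
  case 0 show ?case by (simp add: cb_def)
next
  case (Suc n)
  have "cb (Suc n) = cb n * ((2 * real n + 1) / (2 * real n + 2))" by (rule cb_Suc)
  also have "\<dots> \<le> cb n * 1" by (intro mult_left_mono cb_nonneg) simp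
  finally show ?case using Suc by simp
qed

lemma arcsin_coeff_cb: "arcsin_coeff n * real (2*n+1) = cb n"
proof -
  have p: "(2::real)^(2*n) = 4^n" by (simp add: power_mult)
  have nz: "real (2*n+1) \<noteq> 0" by simp
  have "arcsin_coeff n * real (2*n+1) = (fact (2*n) * real (2*n+1)) / ((4^n * (fact n)^2) * real (2*n+1))"
    unfolding arcsin_coeff_def p by (simp add: mult_ac)
  also have "\<dots> = fact (2*n) / (4^n * (fact n)^2)" by (rule nonzero_mult_divide_mult_cancel_right[OF nz])
  finally show ?thesis by (simp add: cb_def)
qed

lemma arcsin_coeff_nonneg: "arcsin_coeff n \<ge> 0"
  unfolding arcsin_coeff_def by simp

lemma deriv_series:
  fixes x :: real assumes x: "\<bar>x\<bar> < 1"
  shows "(\<lambda>n. cb n * x^(2*n)) sums (1 / sqrt (1 - x^2))"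
proof -
  have "abs (- (x^2)) < 1" using x by (simp add: abs_square_less_1)
  from gen_binomial_real[OF this, of "-1/2"]
  have "(\<lambda>n. ((-1/2) gchoose n) * (- (x^2))^n) sums (1 + (- (x^2))) powr (-1/2)" .
  moreover have "((-1/2) gchoose n) * (- (x^2))^n = cb n * x^(2*n)" for n
    by (simp add: cb_gchoose[symmetric] power_mult power_minus[of "x^2"] mult_ac)
       (simp add: power_mult[symmetric] power2_eq_square power_mult_distrib)
  moreover have "(1 + (- (x^2))) powr (-1/2) = 1 / sqrt (1 - x^2)"
  proof -
    have p: "1 - x^2 > 0" using x by (simp add: abs_square_less_1)
    have "(1 - x^2) powr (-1/2) = 1 / (1 - x^2) powr (1/2)" by (simp add: powr_minus_divide)
    also have "(1 - x^2) powr (1/2) = sqrt (1 - x^2)" using p by (simp add: powr_half_sqrt)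
    finally show ?thesis by simp
  qed
  ultimately show ?thesis by simp
qed

lemma F_deriv:
  fixes x :: real assumes x: "\<bar>x\<bar> < 1"
  shows "summable (\<lambda>n. arcsin_coeff n * x^(2*n+1))"
    "((\<lambda>x. \<Sum>n. arcsin_coeff n * x^(2*n+1)) has_field_derivative (1 / sqrt (1 - x^2))) (at x)"
proof -
  define r where "r = (1 + \<bar>x\<bar>) / 2"
  have r: "\<bar>x\<bar> < r" "r < 1" "0 \<le> r" using x by (auto simp: r_def)
  define S where "S = {-r..r}"
  have d: "((\<lambda>x. arcsin_coeff n * x^(2*n+1)) has_field_derivative (cb n * y^(2*n))) (at y within S)"
    for n y
  proof -
    have D: "((\<lambda>x. arcsin_coeff n * x^(2*n+1)) has_field_derivative
          (arcsin_coeff n * (real (2*n+1) * y^(2*n)))) (at y)"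
      by (rule DERIV_cmult) (use DERIV_pow[of "2*n+1" y] in simp)
    have e: "arcsin_coeff n * (real (2*n+1) * y^(2*n)) = cb n * y^(2*n)"
      using arcsin_coeff_cb[of n] by (simp only: mult.assoc[symmetric])
    from D[unfolded e] show ?thesis by (rule has_field_derivative_at_within)
  qed
  have uc: "uniformly_convergent_on S (\<lambda>n y. \<Sum>i<n. cb i * y^(2*i))"
  proof (rule Weierstrass_m_test'[where f="\<lambda>i y. cb i * y^(2*i)" and M="\<lambda>n. (r^2)^n"])
    fix n y assume "y \<in> S"
    then have "\<bar>y\<bar> \<le> r" by (auto simp: S_def)
    then have "\<bar>y\<bar>^(2*n) \<le> r^(2*n)" by (rule power_mono) simp
    have "norm (cb n * y^(2*n)) = cb n * \<bar>y\<bar>^(2*n)" using cb_nonneg[of n] by (simp add: abs_mult power_abs)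
    also have "\<dots> \<le> 1 * r^(2*n)" by (intro mult_mono cb_le1) (use \<open>\<bar>y\<bar>^(2*n) \<le> r^(2*n)\<close> in auto)
    also have "\<dots> = (r^2)^n" by (simp add: power_mult)
    finally show "norm (cb n * y^(2*n)) \<le> (r^2)^n" .
  next
    show "summable (\<lambda>n. (r^2)^n)" using r by (intro summable_geometric) (simp add: abs_square_less_1)
  qed
  have x0: "0 \<in> S" using r by (simp add: S_def)
  have s0: "summable (\<lambda>n. arcsin_coeff n * 0^(2*n+1))" by simp
  have xi: "x \<in> interior S" using r by (simp add: S_def abs_less_iff)
  have cS: "convex S" unfolding S_def by (rule convex_real_interval)
  have d': "\<And>n y. y \<in> S \<Longrightarrow> ((\<lambda>x. arcsin_coeff n * x^(2*n+1)) has_field_derivative (cb n * y^(2*n))) (at y within S)"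
    by (rule d)
  note H = has_field_derivative_series'[OF cS d' uc x0 s0 xi]
  show "summable (\<lambda>n. arcsin_coeff n * x^(2*n+1))" using H(1) by (simp add: S_def)
  have "(\<Sum>n. cb n * x^(2*n)) = 1 / sqrt (1 - x^2)" by (rule sums_unique[symmetric, OF deriv_series[OF x]])
  then show "((\<lambda>x. \<Sum>n. arcsin_coeff n * x^(2*n+1)) has_field_derivative (1 / sqrt (1 - x^2))) (at x)"
    using H(2) by (simp add: S_def)
qed

lemma arcsin_series_open:
  fixes x :: real assumes x: "\<bar>x\<bar> < 1"
  shows "(\<lambda>n. arcsin_coeff n * x^(2*n+1)) sums arcsin x"
proof -
  define F where "F x = (\<Sum>n. arcsin_coeff n * x^(2*n+1))" for x :: real
  have "(\<lambda>y. F y - arcsin y) x = (\<lambda>y. F y - arcsin y) 0"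
  proof (rule DERIV_isconst3[of "-1" 1 x 0 "\<lambda>y. F y - arcsin y"])
    show "x \<in> {-1<..<1}" "0 \<in> {-1<..<(1::real)}" using x by auto
    fix y :: real assume y: "y \<in> {-1<..<1}"
    then have ay: "\<bar>y\<bar> < 1" by auto
    have "((\<lambda>y. F y - arcsin y) has_field_derivative (1 / sqrt (1 - y^2) - inverse (sqrt (1 - y^2)))) (at y)"
      unfolding F_def using y by (intro DERIV_diff F_deriv(2)[OF ay] DERIV_arcsin) auto
    then show "((\<lambda>y. F y - arcsin y) has_field_derivative 0) (at y)" by (simp add: divide_inverse)
  qed simp
  moreover have "F 0 = 0" by (simp add: F_def)
  ultimately have "F x = arcsin x" by simp
  then show ?thesis using F_deriv(1)[OF x] unfolding F_def by (metis summable_sums)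
qed

lemma partial_le: "(\<Sum>n<N. arcsin_coeff n) \<le> pi/2"
proof -
  have lim: "((\<lambda>x. \<Sum>n<N. arcsin_coeff n * x^(2*n+1)) \<longlongrightarrow> (\<Sum>n<N. arcsin_coeff n * 1^(2*n+1))) (at_left 1)"
    by (intro tendsto_intros)
  have ev: "eventually (\<lambda>x. (\<Sum>n<N. arcsin_coeff n * x^(2*n+1)) \<le> pi/2) (at_left (1::real))"
    using eventually_at_left_real[of 0 "1::real"]
  proof (rule eventually_mono)
    fix x :: real assume "x \<in> {0<..<1}"
    then have x: "\<bar>x\<bar> < 1" "x \<ge> 0" by auto
    have "(\<Sum>n<N. arcsin_coeff n * x^(2*n+1)) \<le> (\<Sum>n. arcsin_coeff n * x^(2*n+1))"
      by (rule sum_le_suminf[OF sums_summable[OF arcsin_series_open[OF x(1)]]])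
         (use x arcsin_coeff_nonneg in auto)
    also have "\<dots> = arcsin x" using sums_unique[OF arcsin_series_open[OF x(1)]] by simp
    also have "\<dots> \<le> pi/2" using x by (intro arcsin_ubound) auto
    finally show "(\<Sum>n<N. arcsin_coeff n * x^(2*n+1)) \<le> pi/2" .
  qed simp
  from tendsto_upperbound[OF lim ev] show ?thesis by simp
qed

lemma summable_coeff: "summable arcsin_coeff"
  by (rule summableI_nonneg_bounded[OF arcsin_coeff_nonneg partial_le])

lemma suminf_coeff: "(\<Sum>n. arcsin_coeff n) = pi/2"
proof -
  define S where "S = (\<Sum>n. arcsin_coeff n)"
  have le: "S \<le> pi/2" unfolding S_def by (rule suminf_le_const[OF summable_coeff partial_le])
  have ge0: "S \<ge> 0" unfolding S_def by (rule suminf_nonneg[OF summable_coeff arcsin_coeff_nonneg])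
  have lb: "arcsin x \<le> S" if x: "0 \<le> x" "x < 1" for x :: real
  proof -
    have "arcsin x = (\<Sum>n. arcsin_coeff n * x^(2*n+1))" using sums_unique[OF arcsin_series_open] x by simp
    also have "\<dots> \<le> S" unfolding S_def
    proof (rule suminf_le)
      show "arcsin_coeff n * x^(2*n+1) \<le> arcsin_coeff n" for n
        using x arcsin_coeff_nonneg[of n] by (intro mult_left_le power_le_one) auto
      show "summable (\<lambda>n. arcsin_coeff n * x^(2*n+1))" using arcsin_series_open[of x] x sums_summable by auto
    qed (rule summable_coeff)
    finally show ?thesis .
  qed
  have "S = pi/2"
  proof (rule ccontr)
    assume "S \<noteq> pi/2"
    then have Sl: "S < pi/2" using le by simp
    define y where "y = (S + pi/2) / 2"
    have y: "S < y" "y < pi/2" "0 \<le> y" using Sl ge0 by (auto simp: y_def)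
    have "0 \<le> sin y" using y by (intro sin_ge_zero) auto
    moreover have "sin y < 1"
    proof -
      have "sin y < sin (pi/2)" using y by (intro sin_monotone_2pi) auto
      then show ?thesis by simp
    qed
    ultimately have "arcsin (sin y) \<le> S" by (intro lb)
    moreover have "arcsin (sin y) = y" using y by (intro arcsin_sin) auto
    ultimately show False using y by simp
  qed
  then show ?thesis by (simp add: S_def)
qed

theorem arcsin_series:
  fixes x :: real assumes x: "\<bar>x\<bar> \<le> 1"
  shows "(\<lambda>n. arcsin_coeff n * x^(2*n+1)) sums arcsin x"
proof -
  consider "\<bar>x\<bar> < 1" | "x = 1" | "x = -1" using x by linarith
  then show ?thesis
  proof cases
    case 1 then show ?thesis by (rule arcsin_series_open)
  next
    case 2
    have "arcsin_coeff sums (pi/2)" using summable_coeff suminf_coeff by (metis summable_sums)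
    then show ?thesis using 2 by simp
  next
    case 3
    have "arcsin_coeff sums (pi/2)" using summable_coeff suminf_coeff by (metis summable_sums)
    then have "(\<lambda>n. - arcsin_coeff n) sums (- (pi/2))" by (rule sums_minus)
    then show ?thesis using 3 by simp
  qed
qed


lemma cs_prod_half:
  fixes c :: "int \<Rightarrow> 'a::complex_banach_algebra_1"
  assumes cs: "cosine_seq c"
  shows "c n * c m = scaleR (1/2) (c (n + m) + c (n - m))"
proof -
  have "c (n + m) + c (n - m) = 2 * c n * c m" by (rule cs_eq[OF cs])
  also have "\<dots> = scaleR 2 (c n * c m)" by (simp add: scaleR_conv_of_real mult.assoc)
  finally show ?thesis by simp
qed

lemma pow_bound:
  fixes c :: "int \<Rightarrow> 'a::complex_banach_algebra_1"
  assumes cs: "cosine_seq c" and ball: "\<And>k. norm (c k) \<le> M"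
  shows "norm (c n ^ p * c m) \<le> M"
proof (induction p arbitrary: m)
  case 0 then show ?case using ball by simp
next
  case (Suc p)
  have "c n ^ Suc p * c m = c n ^ p * (c n * c m)" by (simp only: power_Suc2 mult.assoc)
  also have "\<dots> = c n ^ p * scaleR (1/2) (c (n + m) + c (n - m))" by (simp only: cs_prod_half[OF cs])
  also have "\<dots> = scaleR (1/2) (c n ^ p * c (n + m) + c n ^ p * c (n - m))" by (simp add: distrib_left)
  also have "norm \<dots> \<le> (1/2) * (norm (c n ^ p * c (n + m)) + norm (c n ^ p * c (n - m)))"
    by (simp add: norm_triangle_ineq)
  also have "\<dots> \<le> (1/2) * (M + M)" by (intro mult_left_mono add_mono Suc.IH) auto
  finally show ?case by simp
qed

theorem proposition2p1:
  fixes c :: "int \<Rightarrow> 'a::complex_banach_algebra_1" and M :: real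
  assumes "cosine_seq c"
    and "\<forall>n\<ge>1. norm (c n) \<le> M"
  shows "(\<forall>n\<ge>1. \<forall>p::nat\<ge>1. norm (c n ^ p) \<le> M)
    \<and> (\<forall>n\<ge>1. norm (ba_arccos (c n)) \<le> (M + 1) / 2 * pi)
    \<and> (\<forall>n::nat. spec (c (int n)) \<subseteq> complex_of_real ` {-1..1})
    \<and> (\<forall>chi. character chi \<longrightarrow>
          (chi (c 1) \<in> complex_of_real ` {-1..1}
           \<and> chi (ba_arccos (c 1)) = complex_of_real (arccos (Re (chi (c 1))))
           \<and> arccos (Re (chi (c 1))) \<in> {0..pi}
           \<and> (\<forall>n::nat\<ge>1. chi (c (int n)) =
                 complex_of_real (cos (real n * arccos (Re (chi (c 1))))))))"
proof -
  note cs = assms(1) and bd = assms(2)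
  have M1: "M \<ge> 1" by (rule M_ge_1[OF cs bd])
  have ball: "norm (c k) \<le> M" for k using bound_all[OF cs bd, of k] M1 by simp
  have P1: "norm (c n ^ p) \<le> M" for n p
    using pow_bound[OF cs ball, of n p 0] by (simp add: cs_0[OF cs])
  have summ: "summable (\<lambda>k. arcsin_coeff k *\<^sub>R (x ^ (2*k+1)))" if x: "\<And>p. norm (x ^ p) \<le> M"
    for x :: 'a
  proof (rule summable_comparison_test'[where N=0])
    show "summable (\<lambda>k. arcsin_coeff k * M)" by (rule summable_mult2[OF summable_coeff])
    fix k :: nat
    show "norm (arcsin_coeff k *\<^sub>R (x ^ (2*k+1))) \<le> arcsin_coeff k * M"
      using arcsin_coeff_nonneg[of k] x[of "2*k+1"] by (simp add: mult_left_mono)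
  qed
  have part2: "norm (ba_arccos (c n)) \<le> (M + 1) / 2 * pi" for n
  proof -
    have "norm (\<Sum>k. arcsin_coeff k *\<^sub>R (c n ^ (2*k+1))) \<le> (\<Sum>k. arcsin_coeff k * M)"
    proof (rule norm_suminf_le)
      show "norm (arcsin_coeff k *\<^sub>R (c n ^ (2*k+1))) \<le> arcsin_coeff k * M" for k
        using arcsin_coeff_nonneg[of k] P1[of n "2*k+1"] by (simp add: mult_left_mono)
      show "summable (\<lambda>k. arcsin_coeff k * M)" by (rule summable_mult2[OF summable_coeff])
    qed
    also have "(\<Sum>k. arcsin_coeff k * M) = pi/2 * M"
      using suminf_mult2[OF summable_coeff, of M] suminf_coeff by simp
    finally have s: "norm (\<Sum>k. arcsin_coeff k *\<^sub>R (c n ^ (2*k+1))) \<le> pi/2 * M" .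
    have "norm (ba_arccos (c n)) \<le> norm (scaleR (pi/2) (1::'a)) + norm (\<Sum>k. arcsin_coeff k *\<^sub>R (c n ^ (2*k+1)))"
      unfolding ba_arccos_def by (rule norm_triangle_ineq4)
    also have "\<dots> \<le> pi/2 + pi/2 * M" using s by simp
    also have "\<dots> = (M + 1) / 2 * pi" by (simp add: field_simps)
    finally show ?thesis .
  qed
  have part4: "chi (c 1) \<in> complex_of_real ` {-1..1}
           \<and> chi (ba_arccos (c 1)) = complex_of_real (arccos (Re (chi (c 1))))
           \<and> arccos (Re (chi (c 1))) \<in> {0..pi}
           \<and> (\<forall>n::nat\<ge>1. chi (c (int n)) =
                 complex_of_real (cos (real n * arccos (Re (chi (c 1))))))"
    if ch: "character chi" for chi
  proof -
    have "chi (c 1) \<in> spec (c 1)" unfolding spec_def using chi_not_inv[OF ch] by simp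
    also have "spec (c 1) \<subseteq> complex_of_real ` {-1..1}" using spec_all[OF cs bd, of 1] by simp
    finally have y: "chi (c 1) \<in> complex_of_real ` {-1..1}" .
    then obtain s where s: "s \<in> {-1..1}" "chi (c 1) = complex_of_real s" by blast
    have Re: "Re (chi (c 1)) = s" using s by simp
    have s1: "-1 \<le> s" "s \<le> 1" using s by auto
    have sm: "summable (\<lambda>k. arcsin_coeff k *\<^sub>R (c 1 ^ (2*k+1)))" by (rule summ) (rule P1)
    have s1': "(\<lambda>k. chi (arcsin_coeff k *\<^sub>R (c 1 ^ (2*k+1)))) sums chi (\<Sum>k. arcsin_coeff k *\<^sub>R (c 1 ^ (2*k+1)))"
      by (rule bounded_linear.sums[OF bounded_linear_chi[OF ch] summable_sums[OF sm]])
    have eqf: "(\<lambda>k. chi (arcsin_coeff k *\<^sub>R (c 1 ^ (2*k+1)))) = (\<lambda>k. complex_of_real (arcsin_coeff k * s^(2*k+1)))"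
      by (rule ext) (simp only: chi_scaleR[OF ch] chi_power[OF ch] s(2), simp)
    have s3: "(\<lambda>k. complex_of_real (arcsin_coeff k * s^(2*k+1))) sums complex_of_real (arcsin s)"
      by (rule sums_of_real[OF arcsin_series]) (use s1 in auto)
    from s1' have "(\<lambda>k. complex_of_real (arcsin_coeff k * s^(2*k+1))) sums chi (\<Sum>k. arcsin_coeff k *\<^sub>R (c 1 ^ (2*k+1)))"
      by (simp only: eqf)
    from sums_unique2[OF this s3]
    have "chi (\<Sum>k. arcsin_coeff k *\<^sub>R (c 1 ^ (2*k+1))) = complex_of_real (arcsin s)" .
    then have A: "chi (ba_arccos (c 1)) = complex_of_real (arccos s)"
      unfolding ba_arccos_def using s1
      by (simp add: chi_diff[OF ch] chi_scaleR[OF ch] chi_one[OF ch] arccos_arcsin_eq)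
    have B: "arccos s \<in> {0..pi}" using s1 by (simp add: arccos_lbound arccos_ubound)
    have chi2: "chi (2::'a) = 2" using chi_of_real[OF ch, of 2] by simp
    have two: "chi (2 * x) = 2 * chi x" for x
    proof -
      have "chi (2 * x) = chi (of_real 2 * x)" by simp
      also have "\<dots> = of_real 2 * chi x" by (simp only: chi_mult[OF ch] chi_of_real[OF ch])
      finally show ?thesis by simp
    qed
    have rec: "chi (c (int (Suc (Suc k)))) = 2 * complex_of_real s * chi (c (int (Suc k))) - chi (c (int k))" for k
    proof -
      have "2 * c 1 * c (int (Suc k)) = c (int (Suc k) + 1) + c (int (Suc k) - 1)" by (rule cs_rec[OF cs])
      then have "chi (2 * c 1 * c (int (Suc k))) = chi (c (int (Suc (Suc k)))) + chi (c (int k))"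
        by (simp add: chi_add[OF ch] add.commute)
      moreover have "chi (2 * c 1 * c (int (Suc k))) = 2 * complex_of_real s * chi (c (int (Suc k)))"
        by (simp add: chi2 chi_mult[OF ch] s(2))
      ultimately show ?thesis by (simp add: algebra_simps)
    qed
    define b where "b = arccos s"
    have cb: "cos b = s" using s1 by (simp add: b_def)
    have vals: "chi (c (int n)) = complex_of_real (cos (real n * b)) \<and>
                chi (c (int (Suc n))) = complex_of_real (cos (real (Suc n) * b))" for n
    proof (induction n)
      case 0 show ?case using cs_0[OF cs] chi_one[OF ch] s(2) cb by simp
    next
      case (Suc n)
      have "chi (c (int (Suc (Suc n)))) = 2 * complex_of_real s * chi (c (int (Suc n))) - chi (c (int n))"
        by (rule rec)
      also have "\<dots> = complex_of_real (2 * cos b * cos (real (Suc n) * b) - cos (real n * b))"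
        using Suc cb by simp
      also have "2 * cos b * cos (real (Suc n) * b) - cos (real n * b) = cos (real (Suc (Suc n)) * b)"
      proof -
        have "cos (real (Suc (Suc n)) * b) = cos (real (Suc n) * b + b)" by (simp add: algebra_simps)
        moreover have "cos (real n * b) = cos (real (Suc n) * b - b)" by (simp add: algebra_simps)
        ultimately show ?thesis by (simp add: cos_add cos_diff)
      qed
      finally show ?case using Suc by simp
    qed
    have V: "\<forall>n::nat\<ge>1. chi (c (int n)) = complex_of_real (cos (real n * arccos s))"
      using vals by (simp add: b_def)
    show ?thesis unfolding Re by (intro conjI y A B V)
  qed
  show ?thesis
  proof (intro conjI allI impI)
    show "norm (c n ^ p) \<le> M" for n p by (rule P1)
    show "norm (ba_arccos (c n)) \<le> (M + 1) / 2 * pi" for n by (rule part2)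
    show "spec (c (int n)) \<subseteq> complex_of_real ` {-1..1}" for n by (rule spec_all[OF cs bd])
  qed (use part4 in blast)+
qed


end
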